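(* Let $m\ge2$, $K$ an algebraic number field, $a(z)\in K[z]$ monic of degree $m$, $b(z)\in K[z]$ of degree $\le m-1$ with $z^{m-1}$-coefficient $b_{m-1}$. Assume $a(z)=\prod_{i=1}^m(z-\alpha_i)$ with $\alpha_i\in K$ pairwise distinct, $s_i:=b(\alpha_i)/a'(\alpha_i)\in\mathbb{Q}\setminus\mathbb{Z}_{\le-1}$ for all $i$, and $b_{m-1}\notin\mathbb{Z}_{<-1}$. For $0\le j\le m-2$ let \[f_j(z)=\prod_{i=1}^m\Bigl(1-\frac{\alpha_i}{z}\Bigr)^{s_i}\cdot\frac{1}{z^{j+1}}F^{(m)}_D\Bigl(b_{m-1}+j+1,\,1+s_1,\ldots,1+s_m,\,b_{m-1}+j+2;\,\frac{\alpha_1}{z},\ldots,\frac{\alpha_m}{z}\Bigr).\] Then $f_0,\ldots,f_{m-2}$ are linearly independent over $K$, and $L\cdot f_j(z)\in K[z]$ for $0\le j\le m-2$, where $L=-a(z)\frac{d}{dz}+b(z)$.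
   Context: $(x)_0=1$, $(x)_k=x(x+1)\cdots(x+k-1)$; $F^{(m)}_D(\alpha,\beta_1,\ldots,\beta_m,\gamma;z_1,\ldots,z_m)=\sum_{k_1,\ldots,k_m\ge0}\frac{(\alpha)_{k_1+\cdots+k_m}\prod_i(\beta_i)_{k_i}}{(\gamma)_{k_1+\cdots+k_m}\prod_ik_i!}\prod_i z_i^{k_i}$; $(1-\alpha/z)^s=\sum_{k\ge0}\frac{(-s)_k}{k!}\alpha^kz^{-k}$. These are formal series in $(1/z)K[[1/z]]$, and $L\cdot f=-af'+bf$ with termwise differentiation. *)

theory Defs
  imports "HOL-Computational_Algebra.Computational_Algebra"
begin

definition algebraic_number_field :: "'a::field_char_0 itself \<Rightarrow> bool" where
  "algebraic_number_field _ \<longleftrightarrow>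
     (\<exists>B::'a set. finite B \<and> (\<forall>x::'a. \<exists>c::'a \<Rightarrow> rat. x = (\<Sum>v\<in>B. of_rat (c v) * v)))"

text \<open>Formal series in \<open>1/z\<close> are represented as formal Laurent series in the variable
  \<open>X = 1/z\<close>; the coefficient of \<open>X^n\<close> is the coefficient of \<open>z^(-n)\<close>.\<close>
definition poly_in_z :: "'a::field poly \<Rightarrow> 'a fls" where
  "poly_in_z p = (\<Sum>i\<le>degree p. fls_const (coeff p i) * fls_X_inv ^ i)"

text \<open>Termwise derivative with respect to \<open>z\<close>: since \<open>X = 1/z\<close>, \<open>d/dz = -X^2 d/dX\<close>,
  i.e. \<open>\<Sum> c_n z^(-n) \<mapsto> \<Sum> (-n) c_n z^(-n-1)\<close>.\<close>
definition deriv_z :: "'a::field fls \<Rightarrow> 'a fls" where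
  "deriv_z f = - (fls_X ^ 2 * fls_deriv f)"

definition L_op :: "'a::field poly \<Rightarrow> 'a poly \<Rightarrow> 'a fls \<Rightarrow> 'a fls" where
  "L_op a b f = - (poly_in_z a * deriv_z f) + poly_in_z b * f"

text \<open>\<open>(1 - \<alpha>/z)^s = \<Sum>_k (-s)_k/k! \<alpha>^k z^(-k)\<close>, as a power series in \<open>X = 1/z\<close>.\<close>
definition binom_series :: "'a::field_char_0 \<Rightarrow> 'a \<Rightarrow> 'a fps" where
  "binom_series \<alpha> s = Abs_fps (\<lambda>k. pochhammer (-s) k / fact k * \<alpha> ^ k)"

text \<open>Lauricella \<open>F_D^(m)(A, \<beta>_1..\<beta>_m, \<gamma>; \<alpha>_1/z, .., \<alpha>_m/z)\<close> as a power series in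
  \<open>X = 1/z\<close> (indices \<open>0..m-1\<close>): the coefficient of \<open>X^n\<close> collects all multi-indices
  \<open>(k_1,..,k_m)\<close> with \<open>k_1 + .. + k_m = n\<close>.\<close>
definition lauricella_FD_at :: "nat \<Rightarrow> 'a::field_char_0 \<Rightarrow> (nat \<Rightarrow> 'a) \<Rightarrow> 'a \<Rightarrow> (nat \<Rightarrow> 'a) \<Rightarrow> 'a fps" where
  "lauricella_FD_at m A \<beta> \<gamma> \<alpha> = Abs_fps (\<lambda>n.
     \<Sum>k\<in>{k. k \<in> {..<m} \<rightarrow>\<^sub>E {..n} \<and> sum k {..<m} = n}.
        pochhammer A n * (\<Prod>i<m. pochhammer (\<beta> i) (k i))
        / (pochhammer \<gamma> n * (\<Prod>i<m. fact (k i))) * (\<Prod>i<m. \<alpha> i ^ k i))"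

end

theory Submission
  imports Defs
begin


lemma poly_in_z_nth:
  "fls_nth (poly_in_z p) n = (if n \<le> 0 then coeff p (nat (-n)) else 0)"
proof -
  have "fls_nth (poly_in_z p) n = (\<Sum>i\<le>degree p. coeff p i * (if n = - int i then 1 else 0))"
    unfolding poly_in_z_def by (simp add: fls_nth_sum)
  also have "\<dots> = (\<Sum>i\<in>{..degree p} \<inter> {i. n = - int i}. coeff p i)"
    by (simp add: sum.inter_restrict if_distrib cong: if_cong)
  also have "\<dots> = (if n \<le> 0 then coeff p (nat (-n)) else 0)"
  proof (cases "n \<le> 0")
    case True
    show ?thesis
    proof (cases "nat (-n) \<le> degree p")
      case True
      then have "{..degree p} \<inter> {i. n = - int i} = {nat (-n)}" using \<open>n \<le> 0\<close> by auto
      then show ?thesis using \<open>n \<le> 0\<close> by simp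
    next
      case False
      then have "{..degree p} \<inter> {i. n = - int i} = {}" using \<open>n \<le> 0\<close> by auto
      then show ?thesis using \<open>n \<le> 0\<close> False by (simp add: coeff_eq_0)
    qed
  next
    case False
    then have "{..degree p} \<inter> {i. n = - int i} = {}" by auto
    then show ?thesis using False by simp
  qed
  finally show ?thesis .
qed

lemma poly_in_z_add: "poly_in_z (p + q) = poly_in_z p + poly_in_z q"
  by (rule fls_eqI) (simp add: poly_in_z_nth)

lemma poly_in_z_smult: "poly_in_z (smult c p) = fls_const c * poly_in_z p"
  by (rule fls_eqI) (simp add: poly_in_z_nth)

lemma poly_in_z_0[simp]: "poly_in_z 0 = 0"
  by (rule fls_eqI) (simp add: poly_in_z_nth)

lemma poly_in_z_const: "poly_in_z [:c:] = fls_const c"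
  by (rule fls_eqI) (simp add: poly_in_z_nth coeff_pCons split: nat.split)

lemma poly_in_z_pCons0: "poly_in_z (pCons 0 p) = fls_X_inv * poly_in_z p"
proof (rule fls_eqI)
  fix n
  show "fls_nth (poly_in_z (pCons 0 p)) n = fls_nth (fls_X_inv * poly_in_z p) n"
    apply (simp add: poly_in_z_nth fls_X_inv_times_conv_shift coeff_pCons split: nat.split)
    apply (intro conjI impI allI; simp?)
    subgoal for x2
    proof -
      assume "nat (- n) = Suc x2"
      then have "x2 = nat (- n - 1)" by arith
      then show ?thesis by simp
    qed
    done
qed

lemma poly_in_z_pCons: "poly_in_z (pCons c p) = fls_const c + fls_X_inv * poly_in_z p"
proof -
  have "pCons c p = [:c:] + pCons 0 p" by simp
  then show ?thesis by (simp only: poly_in_z_add poly_in_z_const poly_in_z_pCons0)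
qed

lemma poly_in_z_mult: "poly_in_z (p * q) = poly_in_z p * poly_in_z q"
proof (induction p rule: pCons_induct)
  case 0
  then show ?case by simp
next
  case (pCons c p)
  have "pCons c p * q = smult c q + pCons 0 (p * q)" by simp
  then show ?case using pCons.IH
    by (simp only: poly_in_z_add poly_in_z_smult poly_in_z_pCons0 poly_in_z_pCons) (simp add: algebra_simps)
qed

lemma poly_in_z_1[simp]: "poly_in_z 1 = 1"
  using poly_in_z_const[of 1] by (simp add: one_pCons)

lemma poly_in_z_sum: "poly_in_z (\<Sum>i\<in>S. g i) = (\<Sum>i\<in>S. poly_in_z (g i))"
  by (induction S rule: infinite_finite_induct) (simp_all add: poly_in_z_add)

lemma poly_in_z_prod: "poly_in_z (\<Prod>i\<in>S. g i) = (\<Prod>i\<in>S. poly_in_z (g i))"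
  by (induction S rule: infinite_finite_induct) (simp_all add: poly_in_z_mult)

lemma poly_in_z_linear: "poly_in_z [:- c, 1:] = fls_X_inv - fls_const c"
  by (simp add: poly_in_z_pCons poly_in_z_const)

lemma poly_in_z_monom: "poly_in_z (monom c k) = fls_const c * fls_X_inv ^ k"
  by (rule fls_eqI) (auto simp: poly_in_z_nth coeff_monom)



lemma binom_series_nth: "binom_series \<alpha> s $ k = (-\<alpha>)^k * (s gchoose k)"
proof -
  have m: "(-\<alpha>)^k = (-1)^k * \<alpha>^k" by (rule power_minus)
  have mm: "((-1::'a)^k) * (-1)^k = 1"
    by (simp flip: power_add)
  show ?thesis
    unfolding binom_series_def gbinomial_pochhammer fps_nth_Abs_fps m
    by (simp add: mm algebra_simps)
qed

lemma binom_series_mult: "binom_series \<alpha> s * binom_series \<alpha> t = binom_series \<alpha> (s + t)"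
proof (rule fps_ext)
  fix n
  have "(binom_series \<alpha> s * binom_series \<alpha> t) $ n
      = (\<Sum>i=0..n. (-\<alpha>)^n * ((s gchoose i) * (t gchoose (n - i))))"
    unfolding fps_mult_nth binom_series_nth
    by (rule sum.cong) (auto simp: power_add[symmetric] algebra_simps)
  also have "\<dots> = (-\<alpha>)^n * (fps_binomial s * fps_binomial t) $ n"
    by (simp add: fps_mult_nth sum_distrib_left)
  also have "\<dots> = (-\<alpha>)^n * ((s + t) gchoose n)"
    by (simp add: fps_binomial_add_mult[symmetric])
  finally show "(binom_series \<alpha> s * binom_series \<alpha> t) $ n = binom_series \<alpha> (s + t) $ n"
    by (simp add: binom_series_nth)
qed

lemma binom_series_0: "binom_series \<alpha> 0 = 1"
  by (rule fps_ext) (simp add: binom_series_nth gbinomial_0_left)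

lemma binom_series_1: "binom_series \<alpha> 1 = 1 - fps_const \<alpha> * fps_X"
proof (rule fps_ext)
  fix n show "binom_series \<alpha> 1 $ n = (1 - fps_const \<alpha> * fps_X) $ n"
  proof (cases n)
    case 0 then show ?thesis by (simp add: binom_series_def)
  next
    case (Suc j)
    then show ?thesis
    proof (cases j)
      case 0 then show ?thesis using Suc by (simp add: binom_series_def fps_X_nth)
    next
      case (Suc i)
      have "pochhammer (-1::'a) n = 0" using Suc \<open>n = Suc j\<close>
        by (simp add: pochhammer_rec pochhammer_0_left)
      then show ?thesis using Suc \<open>n = Suc j\<close> by (simp add: binom_series_def fps_X_nth)
    qed
  qed
qed

lemma binom_series_nth0: "binom_series \<alpha> s $ 0 = 1"
  by (simp add: binom_series_nth)

lemma aux_cancel: "(N::'a::field) \<noteq> 0 \<Longrightarrow> F \<noteq> 0 \<Longrightarrow> N * ((c*P)/(N*F) * x) = c*P/F*x"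
  by (simp add: field_simps)

lemma binom_series_deriv:
  "(1 - fps_const \<alpha> * fps_X) * fps_deriv (binom_series \<alpha> s) = fps_const (- s * \<alpha>) * binom_series \<alpha> s"
proof (rule fps_ext)
  fix n
  have e: "pochhammer (-s) (Suc n) = (-s + of_nat n) * pochhammer (-s) n"
    by (simp add: pochhammer_rec')
  show "((1 - fps_const \<alpha> * fps_X) * fps_deriv (binom_series \<alpha> s)) $ n = (fps_const (- s * \<alpha>) * binom_series \<alpha> s) $ n"
  proof (cases n)
    case 0
    then show ?thesis by (simp add: binom_series_def fps_deriv_def)
  next
    case (Suc k)
    have "((1 - fps_const \<alpha> * fps_X) * fps_deriv (binom_series \<alpha> s)) $ n
       = of_nat (Suc n) * (pochhammer (-s) (Suc n) / fact (Suc n) * \<alpha> ^ Suc n)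
         - \<alpha> * (of_nat n * (pochhammer (-s) n / fact n * \<alpha> ^ n))"
      using Suc by (simp add: algebra_simps fps_deriv_def binom_series_def)
    also have "\<dots> = - s * \<alpha> * (pochhammer (-s) n / fact n * \<alpha> ^ n)"
    proof -
      have f: "fact (Suc n) = (of_nat (Suc n) :: 'a) * fact n" by simp
      have nz: "(of_nat (Suc n) :: 'a) \<noteq> 0" by (rule of_nat_neq_0)
      have H: "of_nat (Suc n) * (pochhammer (-s) (Suc n) / fact (Suc n) * \<alpha> ^ Suc n)
            = (-s + of_nat n) * (pochhammer (-s) n / fact n) * \<alpha> ^ Suc n"
        unfolding e f using nz aux_cancel[of "of_nat (Suc n)" "fact n"] by simp
      show ?thesis unfolding H by (simp add: field_simps)
    qed
    finally show ?thesis by (simp add: binom_series_def)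
  qed
qed



definition Sset :: "nat \<Rightarrow> nat \<Rightarrow> (nat \<Rightarrow> nat) set" where
  "Sset m n = {k. k \<in> {..<m} \<rightarrow>\<^sub>E {..n} \<and> sum k {..<m} = n}"

lemma Sset_finite: "finite (Sset m n)"
  unfolding Sset_def by (rule finite_subset[of _ "{..<m} \<rightarrow>\<^sub>E {..n}"]) (auto intro: finite_PiE)

lemma prod_nth_PiE:
  fixes h :: "nat \<Rightarrow> 'a::comm_ring_1 fps"
  shows "(\<Prod>i<m. h i) $ n = (\<Sum>k\<in>Sset m n. \<Prod>i<m. h i $ k i)"
proof (induction m arbitrary: n)
  case 0
  have "Sset 0 n = (if n = 0 then {\<lambda>_. undefined} else {})"
    unfolding Sset_def by auto
  then show ?case by simp
next
  case (Suc m)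
  have "(\<Prod>i<Suc m. h i) $ n = (\<Sum>t=0..n. (\<Prod>i<m. h i) $ t * h m $ (n - t))"
    by (simp add: fps_mult_nth)
  also have "\<dots> = (\<Sum>t=0..n. \<Sum>k\<in>Sset m t. (\<Prod>i<m. h i $ k i) * h m $ (n - t))"
    by (simp add: Suc.IH sum_distrib_right)
  also have "\<dots> = (\<Sum>(t,k)\<in>Sigma {0..n} (Sset m). (\<Prod>i<m. h i $ k i) * h m $ (n - t))"
    by (rule sum.Sigma) (auto simp: Sset_finite)
  also have "\<dots> = (\<Sum>k\<in>Sset (Suc m) n. \<Prod>i<Suc m. h i $ k i)"
  proof (rule sum.reindex_bij_witness[where i = "\<lambda>k. (n - k m, restrict k {..<m})"
                                          and j = "\<lambda>(t,k). k(m := n - t)"])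
    fix a assume a: "a \<in> Sigma {0..n} (Sset m)"
    obtain t k where tk: "a = (t,k)" by (cases a)
    with a have t: "t \<le> n" and kP: "k \<in> {..<m} \<rightarrow>\<^sub>E {..t}" and ks: "sum k {..<m} = t"
      by (auto simp: Sset_def)
    show "(case a of (t, k) \<Rightarrow> k(m := n - t)) \<in> Sset (Suc m) n"
    proof -
      have "k(m := n - t) \<in> {..<Suc m} \<rightarrow>\<^sub>E {..n}"
        using kP t by (auto simp: PiE_iff extensional_def less_Suc_eq intro: le_trans)
      moreover have "sum (k(m := n - t)) {..<Suc m} = n"
      proof -
        have "sum (k(m := n - t)) {..<m} = sum k {..<m}" by (rule sum.cong) auto
        then show ?thesis using ks t by simp
      qed
      ultimately show ?thesis using tk by (simp add: Sset_def)
    qed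
    show "(n - (case a of (t, k) \<Rightarrow> k(m := n - t)) m,
           restrict (case a of (t, k) \<Rightarrow> k(m := n - t)) {..<m}) = a"
      using tk t kP by (auto simp: PiE_iff extensional_def restrict_def fun_eq_iff)
    show "(\<Prod>i<Suc m. h i $ (case a of (t, k) \<Rightarrow> k(m := n - t)) i) =
          (case a of (t, k) \<Rightarrow> (\<Prod>i<m. h i $ k i) * h m $ (n - t))"
    proof -
      have "(\<Prod>i<m. h i $ (k(m := n - t)) i) = (\<Prod>i<m. h i $ k i)" by (rule prod.cong) auto
      then show ?thesis using tk by simp
    qed
  next
    fix b assume b: "b \<in> Sset (Suc m) n"
    then have bP: "b \<in> {..<Suc m} \<rightarrow>\<^sub>E {..n}" and bs: "sum b {..<Suc m} = n"
      by (auto simp: Sset_def)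
    have bs': "sum b {..<m} = n - b m" using bs by simp
    have bm: "b m \<le> n" using bs by simp
    have "restrict b {..<m} \<in> {..<m} \<rightarrow>\<^sub>E {..n - b m}"
    proof -
      have "b i \<le> n - b m" if "i < m" for i
        using member_le_sum[of i "{..<m}" b] that bs' by simp
      then show ?thesis by auto
    qed
    then show "(n - b m, restrict b {..<m}) \<in> Sigma {0..n} (Sset m)"
      using bs' by (simp add: Sset_def)
    show "(case (n - b m, restrict b {..<m}) of (t, k) \<Rightarrow> k(m := n - t)) = b"
      using bP bm by (auto simp: PiE_iff extensional_def restrict_def fun_eq_iff)
  qed
  finally show ?case .
qed



lemma pderiv_at_root:
  fixes \<alpha> :: "nat \<Rightarrow> 'a::field"
  assumes i: "i < m"
  shows "poly (pderiv (\<Prod>l<m. [:- \<alpha> l, 1:])) (\<alpha> i) = (\<Prod>l\<in>{..<m}-{i}. \<alpha> i - \<alpha> l)"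
proof -
  have "poly (pderiv (\<Prod>l<m. [:- \<alpha> l, 1:])) (\<alpha> i)
      = (\<Sum>k<m. \<Prod>l\<in>{..<m}-{k}. \<alpha> i - \<alpha> l)"
    by (simp add: pderiv_prod poly_sum poly_prod pderiv_pCons)
  also have "\<dots> = (\<Prod>l\<in>{..<m}-{i}. \<alpha> i - \<alpha> l) + (\<Sum>k\<in>{..<m}-{i}. \<Prod>l\<in>{..<m}-{k}. \<alpha> i - \<alpha> l)"
    using i by (simp add: sum.remove)
  also have "(\<Sum>k\<in>{..<m}-{i}. \<Prod>l\<in>{..<m}-{k}. \<alpha> i - \<alpha> l) = 0"
  proof (rule sum.neutral, rule ballI)
    fix k assume "k \<in> {..<m}-{i}"
    then have "i \<in> {..<m}-{k}" using i by auto
    then show "(\<Prod>l\<in>{..<m}-{k}. \<alpha> i - \<alpha> l) = 0"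
      by (intro prod_zero) auto
  qed
  finally show ?thesis by simp
qed

lemma pderiv_at_root_nz:
  fixes \<alpha> :: "nat \<Rightarrow> 'a::field"
  assumes i: "i < m" and inj: "inj_on \<alpha> {..<m}"
  shows "poly (pderiv (\<Prod>l<m. [:- \<alpha> l, 1:])) (\<alpha> i) \<noteq> 0"
  unfolding pderiv_at_root[OF i]
proof (subst prod_zero_iff, simp, rule notI)
  assume "\<exists>l\<in>{..<m}-{i}. \<alpha> i - \<alpha> l = 0"
  then obtain l where "l < m" "l \<noteq> i" "\<alpha> i = \<alpha> l" by auto
  with inj i show False by (auto dest: inj_onD)
qed

lemma degree_prod_lin: "degree (\<Prod>l\<in>S. [:- (\<alpha> l::'a::field), 1:]) = card S"
  by (subst degree_prod_sum_eq) auto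

lemma lead_prod_lin: "lead_coeff (\<Prod>l\<in>S. [:- (\<alpha> l::'a::field), 1:]) = 1"
  by (simp add: lead_coeff_prod)

lemma lagrange:
  fixes \<alpha> :: "nat \<Rightarrow> 'a::field" and b :: "'a poly"
  assumes inj: "inj_on \<alpha> {..<m}" and m: "m \<ge> 1" and deg: "degree b \<le> m - 1"
  defines "s \<equiv> \<lambda>i. poly b (\<alpha> i) / poly (pderiv (\<Prod>l<m. [:- \<alpha> l, 1:])) (\<alpha> i)"
  shows "b = (\<Sum>i<m. smult (s i) (\<Prod>l\<in>{..<m}-{i}. [:- \<alpha> l, 1:]))"
proof (rule poly_eqI_degree[where A = "\<alpha> ` {..<m}"])
  have card: "card (\<alpha> ` {..<m}) = m" using inj by (simp add: card_image)
  show "degree b < card (\<alpha> ` {..<m})" using card deg m by simp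
  have "degree (\<Sum>i<m. smult (s i) (\<Prod>l\<in>{..<m}-{i}. [:- \<alpha> l, 1:])) \<le> m - 1"
  proof (rule degree_sum_le)
    fix i assume "i \<in> {..<m}"
    then have "card ({..<m}-{i}) = m - 1" by simp
    then show "degree (smult (s i) (\<Prod>l\<in>{..<m}-{i}. [:- \<alpha> l, 1:])) \<le> m - 1"
      using degree_smult_le[of "s i" "\<Prod>l\<in>{..<m}-{i}. [:- \<alpha> l, 1:]"]
      by (simp add: degree_prod_lin)
  qed simp
  then show "degree (\<Sum>i<m. smult (s i) (\<Prod>l\<in>{..<m}-{i}. [:- \<alpha> l, 1:])) < card (\<alpha> ` {..<m})"
    using card m by simp
  fix x assume "x \<in> \<alpha> ` {..<m}"
  then obtain i where i: "i < m" and x: "x = \<alpha> i" by auto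
  have "poly (\<Sum>k<m. smult (s k) (\<Prod>l\<in>{..<m}-{k}. [:- \<alpha> l, 1:])) (\<alpha> i)
      = (\<Sum>k<m. s k * (\<Prod>l\<in>{..<m}-{k}. \<alpha> i - \<alpha> l))"
    by (simp add: poly_sum poly_prod)
  also have "\<dots> = s i * (\<Prod>l\<in>{..<m}-{i}. \<alpha> i - \<alpha> l) + (\<Sum>k\<in>{..<m}-{i}. s k * (\<Prod>l\<in>{..<m}-{k}. \<alpha> i - \<alpha> l))"
    using i by (simp add: sum.remove)
  also have "(\<Sum>k\<in>{..<m}-{i}. s k * (\<Prod>l\<in>{..<m}-{k}. \<alpha> i - \<alpha> l)) = 0"
  proof (rule sum.neutral, rule ballI)
    fix k assume "k \<in> {..<m}-{i}"
    then have "i \<in> {..<m}-{k}" using i by auto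
    then have "(\<Prod>l\<in>{..<m}-{k}. \<alpha> i - \<alpha> l) = 0"
      by (intro prod_zero) auto
    then show "s k * (\<Prod>l\<in>{..<m}-{k}. \<alpha> i - \<alpha> l) = 0" by simp
  qed
  also have "s i * (\<Prod>l\<in>{..<m}-{i}. \<alpha> i - \<alpha> l) = poly b (\<alpha> i)"
    using pderiv_at_root_nz[OF i inj] unfolding s_def pderiv_at_root[OF i, symmetric] by simp
  finally show "poly b x = poly (\<Sum>k<m. smult (s k) (\<Prod>l\<in>{..<m}-{k}. [:- \<alpha> l, 1:])) x"
    using x by simp
qed

lemma lagrange_coeff:
  fixes \<alpha> :: "nat \<Rightarrow> 'a::field" and s :: "nat \<Rightarrow> 'a"
  assumes m: "m \<ge> 1"
  shows "coeff (\<Sum>i<m. smult (s i) (\<Prod>l\<in>{..<m}-{i}. [:- \<alpha> l, 1:])) (m - 1) = (\<Sum>i<m. s i)"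
proof -
  have "coeff (\<Prod>l\<in>{..<m}-{i}. [:- \<alpha> l, 1:]) (m - 1) = 1" if "i < m" for i
  proof -
    have "card ({..<m}-{i}) = m - 1" using that by simp
    then show ?thesis using lead_prod_lin[of \<alpha> "{..<m}-{i}"] by (simp add: degree_prod_lin)
  qed
  then show ?thesis by (simp add: coeff_sum)
qed



lemma prod_deriv:
  fixes q B :: "nat \<Rightarrow> 'a::field fps" and c :: "nat \<Rightarrow> 'a"
  assumes S: "finite S"
    and ode: "\<And>i. i \<in> S \<Longrightarrow> q i * fps_deriv (B i) = fps_const (c i) * B i"
  shows "(\<Prod>i\<in>S. q i) * fps_deriv (\<Prod>i\<in>S. B i)
         = (\<Prod>i\<in>S. B i) * (\<Sum>i\<in>S. fps_const (c i) * (\<Prod>l\<in>S-{i}. q l))"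
  using S ode
proof (induction S rule: finite_induct)
  case empty
  then show ?case by simp
next
  case (insert a S)
  let ?Q = "\<Prod>i\<in>S. q i" and ?W = "\<Prod>i\<in>S. B i" and ?D = "\<Sum>i\<in>S. fps_const (c i) * (\<Prod>l\<in>S-{i}. q l)"
  have IH: "?Q * fps_deriv ?W = ?W * ?D" using insert by auto
  have oa: "q a * fps_deriv (B a) = fps_const (c a) * B a" using insert by auto
  have s1: "(\<Sum>i\<in>S. fps_const (c i) * (\<Prod>l\<in>insert a S-{i}. q l)) = q a * ?D"
  proof -
    have "(\<Sum>i\<in>S. fps_const (c i) * (\<Prod>l\<in>insert a S-{i}. q l))
        = (\<Sum>i\<in>S. q a * (fps_const (c i) * (\<Prod>l\<in>S-{i}. q l)))"
    proof (rule sum.cong)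
      fix i assume "i \<in> S"
      then have "insert a S - {i} = insert a (S - {i})" using insert by auto
      moreover have "a \<notin> S - {i}" using insert by auto
      ultimately show "fps_const (c i) * (\<Prod>l\<in>insert a S-{i}. q l) = q a * (fps_const (c i) * (\<Prod>l\<in>S-{i}. q l))"
        using insert by (simp add: ac_simps)
    qed simp
    then show ?thesis by (simp add: sum_distrib_left)
  qed
  have "insert a S - {a} = S" using insert by auto
  then have "(\<Sum>i\<in>insert a S. fps_const (c i) * (\<Prod>l\<in>insert a S-{i}. q l))
      = fps_const (c a) * ?Q + q a * ?D"
    using insert s1 by simp
  moreover have "(\<Prod>i\<in>insert a S. q i) * fps_deriv (\<Prod>i\<in>insert a S. B i)
      = (q a * fps_deriv (B a)) * ?Q * ?W + q a * B a * (?Q * fps_deriv ?W)"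
    using insert by (simp add: algebra_simps)
  ultimately show ?case unfolding oa IH using insert by (simp add: algebra_simps)
qed

lemma X_deriv_nth: "(fps_X * fps_deriv G) $ n = of_nat n * G $ n"
  by (cases n) (simp_all add: fps_deriv_def)



lemma lauricella_nth:
  fixes A :: "'a::field_char_0"
  shows "lauricella_FD_at m A \<beta> \<gamma> \<alpha> $ n
     = pochhammer A n / pochhammer \<gamma> n * (\<Prod>i<m. binom_series (\<alpha> i) (- \<beta> i)) $ n"
proof -
  have "lauricella_FD_at m A \<beta> \<gamma> \<alpha> $ n
      = (\<Sum>k\<in>Sset m n. pochhammer A n / pochhammer \<gamma> n * (\<Prod>i<m. binom_series (\<alpha> i) (- \<beta> i) $ k i))"
    unfolding lauricella_FD_at_def Sset_def fps_nth_Abs_fps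
  proof (rule sum.cong)
    fix k
    show "pochhammer A n * (\<Prod>i<m. pochhammer (\<beta> i) (k i)) / (pochhammer \<gamma> n * (\<Prod>i<m. fact (k i))) *
          (\<Prod>i<m. \<alpha> i ^ k i) =
          pochhammer A n / pochhammer \<gamma> n * (\<Prod>i<m. binom_series (\<alpha> i) (- \<beta> i) $ k i)"
      by (simp add: binom_series_def prod.distrib prod_dividef)
  qed simp
  also have "\<dots> = pochhammer A n / pochhammer \<gamma> n * (\<Prod>i<m. binom_series (\<alpha> i) (- \<beta> i)) $ n"
    by (simp add: prod_nth_PiE sum_distrib_left)
  finally show ?thesis .
qed

lemma poch_cancel:
  fixes A :: "'a::field_char_0"
  assumes "pochhammer (A + 1) n \<noteq> 0"
  shows "(A + of_nat n) * (pochhammer A n / pochhammer (A + 1) n) = A"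
proof -
  have "pochhammer A (Suc n) = A * pochhammer (A + 1) n" by (rule pochhammer_rec)
  moreover have "pochhammer A (Suc n) = (A + of_nat n) * pochhammer A n" by (rule pochhammer_rec')
  ultimately show ?thesis using assms by (simp add: field_simps)
qed

lemma G_ode:
  fixes A B :: "'a::field_char_0"
  assumes A: "A = B + of_nat j + 1"
    and nz: "\<And>n. pochhammer (A + 1) n \<noteq> 0"
  shows "fps_X * fps_deriv (fps_X ^ (j+1) * lauricella_FD_at m A \<beta> (A + 1) \<alpha>)
           + fps_const B * (fps_X ^ (j+1) * lauricella_FD_at m A \<beta> (A + 1) \<alpha>)
         = fps_const A * fps_X ^ (j+1) * (\<Prod>i<m. binom_series (\<alpha> i) (- \<beta> i))"
proof (rule fps_ext)
  fix n
  let ?F = "lauricella_FD_at m A \<beta> (A + 1) \<alpha>" and ?V = "\<Prod>i<m. binom_series (\<alpha> i) (- \<beta> i)"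
  have "(fps_X * fps_deriv (fps_X ^ (j+1) * ?F) + fps_const B * (fps_X ^ (j+1) * ?F)) $ n
      = (of_nat n + B) * (fps_X ^ (j+1) * ?F) $ n"
    unfolding fps_add_nth X_deriv_nth fps_mult_left_const_nth by (simp add: algebra_simps)
  also have "\<dots> = (fps_const A * fps_X ^ (j+1) * ?V) $ n"
  proof (cases "n < j + 1")
    case True
    then show ?thesis by (simp add: fps_X_power_mult_nth mult.assoc del: power_Suc)
  next
    case False
    then obtain k where k: "n = j + 1 + k" by (metis le_add_diff_inverse not_less)
    have e1: "of_nat n + B = A + of_nat k" using k A by simp
    have e2: "(fps_X ^ (j+1) * ?F) $ n = ?F $ k"
      using k by (simp add: fps_X_power_mult_nth del: power_Suc)
    have e3: "(fps_X ^ (j+1) * ?V) $ n = ?V $ k"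
      using k by (simp add: fps_X_power_mult_nth del: power_Suc)
    have "(of_nat n + B) * (fps_X ^ (j+1) * ?F) $ n = (A + of_nat k) * ?F $ k"
      unfolding e1 e2 ..
    also have "\<dots> = A * ?V $ k"
    proof -
      have "(A + of_nat k) * ?F $ k = ((A + of_nat k) * (pochhammer A k / pochhammer (A + 1) k)) * ?V $ k"
        unfolding lauricella_nth by (simp only: mult.assoc)
      then show ?thesis unfolding poch_cancel[OF nz[of k]] .
    qed
    also have "\<dots> = (fps_const A * fps_X ^ (j+1) * ?V) $ n"
      unfolding mult.assoc fps_mult_left_const_nth e3 ..
    finally show ?thesis .
  qed
  finally show "(fps_X * fps_deriv (fps_X ^ (j+1) * ?F) + fps_const B * (fps_X ^ (j+1) * ?F)) $ n
      = (fps_const A * fps_X ^ (j+1) * ?V) $ n" .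
qed



lemma fps_to_fls_sum: "fps_to_fls (\<Sum>i\<in>S. g i) = (\<Sum>i\<in>S. fps_to_fls (g i))"
  by (induction S rule: infinite_finite_induct) simp_all

lemma fps_to_fls_prod: "fps_to_fls (\<Prod>i\<in>S. g i) = (\<Prod>i\<in>S. fps_to_fls (g i :: 'a::comm_ring_1 fps))"
  by (induction S rule: infinite_finite_induct) (simp_all add: fls_times_fps_to_fls)

lemma fps_const_sum: "fps_const (\<Sum>i\<in>S. g i) = (\<Sum>i\<in>S. fps_const (g i :: 'a::comm_ring_1))"
  by (induction S rule: infinite_finite_induct) (simp_all flip: fps_const_add)

lemma prod_nth0: "(\<Prod>i\<in>S. h i) $ 0 = (\<Prod>i\<in>S. h i $ 0 :: 'a::comm_ring_1)"
  by (induction S rule: infinite_finite_induct) simp_all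

lemma X_inv_X: "fls_X_inv * fls_X = (1 :: 'a::field fls)"
  by (simp add: fls_X_inv_times_conv_shift fls_X_conv_shift_1)

lemma X_inv_pow_X_pow: "fls_X_inv ^ n * fls_X ^ n = (1 :: 'a::field fls)"
  by (simp add: X_inv_X flip: power_mult_distrib)

lemma lin_to_fls:
  "fls_X_inv - fls_const c = fls_X_inv * fps_to_fls (1 - fps_const (c::'a::field) * fps_X)"
proof -
  have "fls_X_inv * fps_to_fls (1 - fps_const c * fps_X) = fls_X_inv - fls_const c * (fls_X_inv * fls_X)"
    by (simp add: fls_times_fps_to_fls algebra_simps)
  then show ?thesis by (simp add: X_inv_X)
qed

lemma poly_in_z_prod_lin:
  "poly_in_z (\<Prod>l\<in>S. [:- \<alpha> l, 1:]) = fls_X_inv ^ card S * fps_to_fls (\<Prod>l\<in>S. 1 - fps_const (\<alpha> l :: 'a::field) * fps_X)"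
  unfolding poly_in_z_prod poly_in_z_linear lin_to_fls fps_to_fls_prod prod.distrib
  by simp



theorem lemma4p1:
  fixes a b :: "'a::field_char_0 poly" and \<alpha> :: "nat \<Rightarrow> 'a" and m :: nat
    and f :: "nat \<Rightarrow> 'a fls"
  assumes K: "algebraic_number_field TYPE('a)"
    and m2: "m \<ge> 2"
    and a_def: "a = (\<Prod>i<m. [:- \<alpha> i, 1:])"
    and distinct: "inj_on \<alpha> {..<m}"
    and deg_b: "degree b \<le> m - 1"
    and s_rat: "\<forall>i<m. poly b (\<alpha> i) / poly (pderiv a) (\<alpha> i) \<in> \<rat>"
    and s_not_neg: "\<forall>i<m. \<not> (\<exists>n::int. n \<le> -1 \<and> poly b (\<alpha> i) / poly (pderiv a) (\<alpha> i) = of_int n)"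
    and b_not_neg: "\<not> (\<exists>n::int. n < -1 \<and> coeff b (m - 1) = of_int n)"
    and f_def: "\<forall>j. f j = fps_to_fls
          ((\<Prod>i<m. binom_series (\<alpha> i) (poly b (\<alpha> i) / poly (pderiv a) (\<alpha> i)))
           * fps_X ^ (j + 1)
           * lauricella_FD_at m (coeff b (m - 1) + of_nat j + 1)
               (\<lambda>i. 1 + poly b (\<alpha> i) / poly (pderiv a) (\<alpha> i))
               (coeff b (m - 1) + of_nat j + 2) \<alpha>)"
  shows "(\<forall>c::nat \<Rightarrow> 'a. (\<Sum>j\<le>m - 2. fls_const (c j) * f j) = 0 \<longrightarrow> (\<forall>j\<le>m - 2. c j = 0))
         \<and> (\<forall>j\<le>m - 2. \<exists>p::'a poly. L_op a b (f j) = poly_in_z p)"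
proof -
  define s where "s i = poly b (\<alpha> i) / poly (pderiv a) (\<alpha> i)" for i
  define B where "B = coeff b (m - 1)"
  define W where "W = (\<Prod>i<m. binom_series (\<alpha> i) (s i))"
  define V where "V = (\<Prod>i<m. binom_series (\<alpha> i) (- (1 + s i)))"
  define q where "q l = 1 - fps_const (\<alpha> l) * fps_X" for l
  define At where "At = (\<Prod>l<m. q l)"
  define bt where "bt = (\<Sum>i<m. fps_const (s i) * (\<Prod>l\<in>{..<m}-{i}. q l))"
  define D where "D = (\<Sum>i<m. fps_const (- s i * \<alpha> i) * (\<Prod>l\<in>{..<m}-{i}. q l))"
  define Fj where "Fj j = lauricella_FD_at m (B + of_nat j + 1) (\<lambda>i. 1 + s i) (B + of_nat j + 1 + 1) \<alpha>" for j
  have m1: "m \<ge> 1" using m2 by simp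
  have fj: "f j = fps_to_fls (W * (fps_X ^ (j + 1) * Fj j))" for j
  proof -
    have e: "coeff b (m - 1) + of_nat j + 2 = coeff b (m - 1) + of_nat j + 1 + 1" by simp
    show ?thesis using f_def[rule_format, of j] unfolding e
      by (simp only: W_def Fj_def s_def B_def mult.assoc)
  qed
  have lag: "b = (\<Sum>i<m. smult (s i) (\<Prod>l\<in>{..<m}-{i}. [:- \<alpha> l, 1:]))"
    using lagrange[OF distinct m1 deg_b] unfolding s_def a_def .
  have Bsum: "B = (\<Sum>i<m. s i)"
    unfolding B_def using lagrange_coeff[OF m1, of s \<alpha>] lag by simp
  have pa: "poly_in_z a = fls_X_inv ^ m * fps_to_fls At"
    unfolding a_def At_def q_def poly_in_z_prod_lin[of \<alpha> "{..<m}"] by simp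
  have pb: "poly_in_z b = fls_X_inv ^ (m - 1) * fps_to_fls bt"
  proof -
    have "poly_in_z b = (\<Sum>i<m. fls_const (s i) * (fls_X_inv ^ (m - 1) * fps_to_fls (\<Prod>l\<in>{..<m}-{i}. q l)))"
      apply (subst lag)
      unfolding poly_in_z_sum poly_in_z_smult q_def
      by (intro sum.cong refl) (simp add: poly_in_z_prod_lin)
    also have "\<dots> = fls_X_inv ^ (m - 1) * fps_to_fls bt"
      unfolding bt_def fps_to_fls_sum sum_distrib_left
      by (intro sum.cong refl) (simp add: fls_times_fps_to_fls algebra_simps)
    finally show ?thesis .
  qed
  have WD: "At * fps_deriv W = W * D"
    unfolding At_def W_def D_def
    by (rule prod_deriv) (simp_all add: q_def binom_series_deriv)
  have XDbt: "fps_X * D + bt = fps_const B * At"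
  proof -
    have c: "fps_const (- s i * \<alpha> i) = - (fps_const (s i) * fps_const (\<alpha> i))" for i by simp
    have "fps_X * D + bt = (\<Sum>i<m. fps_const (s i) * (q i * (\<Prod>l\<in>{..<m}-{i}. q l)))"
      unfolding D_def bt_def sum_distrib_left sum.distrib[symmetric] c
      by (intro sum.cong refl) (simp add: q_def algebra_simps del: fps_const_neg fps_const_mult)
    also have "\<dots> = (\<Sum>i<m. fps_const (s i) * At)"
      unfolding At_def by (intro sum.cong refl) (simp add: prod.remove)
    also have "\<dots> = fps_const B * At"
      unfolding Bsum fps_const_sum sum_distrib_right ..
    finally show ?thesis .
  qed
  have AWV: "At * W * V = 1"
  proof -
    have "At * W * V = (\<Prod>i<m. binom_series (\<alpha> i) 1 * binom_series (\<alpha> i) (s i) * binom_series (\<alpha> i) (- (1 + s i)))"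
      unfolding At_def W_def V_def q_def binom_series_1 prod.distrib ..
    also have "\<dots> = 1"
      by (simp add: binom_series_mult binom_series_0)
    finally show ?thesis .
  qed
  have Hid: "fps_X * At * fps_deriv (W * (fps_X ^ (j + 1) * Fj j)) + bt * (W * (fps_X ^ (j + 1) * Fj j))
        = fps_const (B + of_nat j + 1) * fps_X ^ (j + 1)" for j
  proof -
    define A where "A = B + of_nat j + 1"
    define G where "G = fps_X ^ (j + 1) * Fj j"
    have nz: "pochhammer (A + 1) n \<noteq> 0" for n
    proof
      assume "pochhammer (A + 1) n = 0"
      then obtain k where "k < n" "A + 1 = - of_nat k" by (auto simp: pochhammer_eq_0_iff)
      then have "coeff b (m - 1) = of_int (- int k - int j - 2)"
        unfolding A_def B_def by (simp add: algebra_simps)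
      moreover have "- int k - int j - 2 < -1" by simp
      ultimately show False using b_not_neg by blast
    qed
    have Gode: "fps_X * fps_deriv G + fps_const B * G = fps_const A * fps_X ^ (j + 1) * V"
      unfolding G_def Fj_def A_def[symmetric] V_def
      using G_ode[OF A_def nz, of m "\<lambda>i. 1 + s i" \<alpha>] by simp
    have "fps_X * At * fps_deriv (W * G) + bt * (W * G)
        = fps_X * (At * fps_deriv W) * G + At * W * (fps_X * fps_deriv G) + bt * W * G"
      by (simp add: algebra_simps)
    also have "\<dots> = W * G * (fps_X * D + bt) + At * W * (fps_X * fps_deriv G)"
      unfolding WD by (simp add: algebra_simps)
    also have "\<dots> = At * W * (fps_X * fps_deriv G + fps_const B * G)"
      unfolding XDbt by (simp add: algebra_simps)
    also have "\<dots> = fps_const A * fps_X ^ (j + 1) * (At * W * V)"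
      unfolding Gode by (simp add: algebra_simps)
    finally show ?thesis unfolding AWV G_def A_def by simp
  qed
  show ?thesis
  proof
    show "\<forall>c::nat \<Rightarrow> 'a. (\<Sum>j\<le>m - 2. fls_const (c j) * f j) = 0 \<longrightarrow> (\<forall>j\<le>m - 2. c j = 0)"
    proof (rule allI, rule impI)
      fix c :: "nat \<Rightarrow> 'a" assume sum0: "(\<Sum>j\<le>m - 2. fls_const (c j) * f j) = 0"
      have W0: "W $ 0 = 1" by (simp add: W_def prod_nth0 binom_series_nth0)
      have F0: "Fj i $ 0 = 1" for i by (simp add: Fj_def lauricella_nth prod_nth0 binom_series_nth0)
      have fi: "fls_nth (f i) (int n) = (fps_X ^ (i + 1) * (W * Fj i)) $ n" for i n
        unfolding fj fps_to_fls_nth by (simp add: mult.left_commute)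
      have f_low: "n < i + 1 \<Longrightarrow> fls_nth (f i) (int n) = 0" for i n
        unfolding fi fps_X_power_mult_nth by simp
      have f_lead: "fls_nth (f i) (int (i + 1)) = 1" for i
        unfolding fi fps_X_power_mult_nth using W0 F0[of i] by simp
      show "\<forall>j\<le>m - 2. c j = 0"
      proof (intro allI impI)
        fix j assume "j \<le> m - 2"
        then show "c j = 0"
        proof (induction j rule: less_induct)
          case (less j)
          have "0 = fls_nth (\<Sum>i\<le>m - 2. fls_const (c i) * f i) (int (j + 1))"
            using sum0 by simp
          also have "\<dots> = (\<Sum>i\<le>m - 2. c i * fls_nth (f i) (int (j + 1)))"
            by (simp only: fls_nth_sum fls_mult_const_nth)
          also have "\<dots> = c j * fls_nth (f j) (int (j + 1)) + (\<Sum>i\<in>{..m - 2} - {j}. c i * fls_nth (f i) (int (j + 1)))"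
            using less.prems by (simp add: sum.remove)
          also have "(\<Sum>i\<in>{..m - 2} - {j}. c i * fls_nth (f i) (int (j + 1))) = 0"
          proof (rule sum.neutral, rule ballI)
            fix i assume i: "i \<in> {..m - 2} - {j}"
            show "c i * fls_nth (f i) (int (j + 1)) = 0"
            proof (cases "i < j")
              case True
              then have "c i = 0" using less.IH i by auto
              then show ?thesis by simp
            next
              case False
              then have "j + 1 < i + 1" using i by auto
              then show ?thesis using f_low[of "j + 1" i] by simp
            qed
          qed
          finally show ?case unfolding f_lead by simp
        qed
      qed
    qed
  next
    show "\<forall>j\<le>m - 2. \<exists>p::'a poly. L_op a b (f j) = poly_in_z p"
    proof (intro allI impI)
      fix j assume j: "j \<le> m - 2"
      define H where "H = W * (fps_X ^ (j + 1) * Fj j)"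
      have fH: "f j = fps_to_fls H" unfolding H_def fj ..
      have dz: "deriv_z (fps_to_fls H) = - (fls_X ^ 2 * fps_to_fls (fps_deriv H))"
        unfolding deriv_z_def fls_deriv_fps_to_fls ..
      have mm: "fls_X_inv ^ m = fls_X_inv ^ (m - 1) * (fls_X_inv :: 'a fls)"
        using m1 by (metis Suc_diff_1 less_le_trans power_Suc2 zero_less_one)
      have X2: "(fls_X_inv ^ (m - 1) * fls_X_inv) * fls_X ^ 2 = fls_X_inv ^ (m - 1) * (fls_X :: 'a fls)"
      proof -
        have "(fls_X_inv ^ (m - 1) * fls_X_inv) * fls_X ^ 2 = fls_X_inv ^ (m - 1) * (fls_X_inv * fls_X) * (fls_X :: 'a fls)"
          by (simp add: power2_eq_square algebra_simps)
        then show ?thesis unfolding X_inv_X by simp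
      qed
      have "L_op a b (f j) = (fls_X_inv ^ (m - 1) * fls_X_inv) * fls_X ^ 2 * fps_to_fls At * fps_to_fls (fps_deriv H)
              + fls_X_inv ^ (m - 1) * fps_to_fls bt * fps_to_fls H"
        unfolding L_op_def dz pa pb fH mm by (simp add: algebra_simps)
      also have "\<dots> = fls_X_inv ^ (m - 1) * fps_to_fls (fps_X * At * fps_deriv H + bt * H)"
        unfolding X2 by (simp add: fls_times_fps_to_fls algebra_simps)
      also have "fps_X * At * fps_deriv H + bt * H = fps_const (B + of_nat j + 1) * fps_X ^ (j + 1)"
        unfolding H_def by (rule Hid)
      also have "fls_X_inv ^ (m - 1) * fps_to_fls (fps_const (B + of_nat j + 1) * fps_X ^ (j + 1))
          = fls_const (B + of_nat j + 1) * fls_X_inv ^ (m - 2 - j) * (fls_X_inv ^ (j + 1) * fls_X ^ (j + 1))"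
      proof -
        have "m - 1 = (m - 2 - j) + (j + 1)" using j m2 by simp
        then have "fls_X_inv ^ (m - 1) = fls_X_inv ^ (m - 2 - j) * (fls_X_inv ^ (j + 1) :: 'a fls)"
          by (metis power_add)
        then show ?thesis by (simp add: fls_times_fps_to_fls fps_to_fls_power algebra_simps)
      qed
      also have "\<dots> = poly_in_z (monom (B + of_nat j + 1) (m - 2 - j))"
        unfolding X_inv_pow_X_pow poly_in_z_monom by simp
      finally show "\<exists>p::'a poly. L_op a b (f j) = poly_in_z p" by blast
    qed
  qed
qed

end
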